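(* Let $K=(C,\langle Q_i,1\le i\le k\rangle)$ be a CMI in pure form, let $\mathbb I_K$ be its set of repeated indices, and let $P_j=Q_{i_j}\setminus\mathbb I_K$, $1\le j\le t$ (with $1\le i_1\le\dots\le i_t\le k$), be the nonempty sets among the $Q_i\setminus\mathbb I_K$. Then, for a given joint distribution of $X_1,\dots,X_n$, $K$ is valid if and only if both $(C,\langle\mathbb I_K,\mathbb I_K\rangle)$ and $(C,\langle P_i,1\le i\le t\rangle)$ are valid.
   Context: $X_1,\dots,X_n$ are jointly distributed discrete random variables with $H(X_i)<\infty$; $X_\alpha=(X_i,i\in\alpha)$, $X_\emptyset$ is a constant. A CMI $(C,\langle Q_1,\dots,Q_k\rangle)$, $k\ge0$, with $C\subseteq\{1,\dots,n\}$ and an unordered multiset of subsets $Q_i$, is valid for a given distribution if $\sum_{i=1}^kH(X_{Q_i}|X_C)-H(X_{Q_1},\dots,X_{Q_k}|X_C)=0$ (automatically when $k\le1$); empty members may be deleted. Thus $(C,\langle A,A\rangle)$ is valid iff $H(X_A|X_C)=0$. Pure form: all $Q_i\ne\emptyset$ and $Q_i\cap C=\emptyset$. Repeated indices: if $k\ge2$, $\mathbb I_K$ is the set of indices lying in at least two members (distinct positions) of the collection; $\mathbb I_K=\emptyset$ if $k\le1$. *)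

theory Defs
  imports "HOL-Probability.Probability"
begin

text \<open>A joint distribution of X_1,...,X_n is a discrete probability distribution p on
  outcomes \<omega> :: nat \<Rightarrow> 'v, with X_i(\<omega>) = \<omega> i.\<close>

definition proj :: "nat set \<Rightarrow> (nat \<Rightarrow> 'v) \<Rightarrow> (nat \<Rightarrow> 'v)" where
  "proj A \<omega> = (\<lambda>i. if i \<in> A then \<omega> i else undefined)"

definition ent_term :: "(nat \<Rightarrow> 'v) pmf \<Rightarrow> nat set \<Rightarrow> (nat \<Rightarrow> 'v) \<Rightarrow> real" where
  "ent_term p A y = (let q = pmf (map_pmf (proj A) p) y in - (q * log 2 q))"

definition finite_entropy :: "(nat \<Rightarrow> 'v) pmf \<Rightarrow> nat set \<Rightarrow> bool" where
  "finite_entropy p A \<longleftrightarrow> ent_term p A summable_on UNIV"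

definition H :: "(nat \<Rightarrow> 'v) pmf \<Rightarrow> nat set \<Rightarrow> real" where
  "H p A = infsum (ent_term p A) UNIV"

definition Hc :: "(nat \<Rightarrow> 'v) pmf \<Rightarrow> nat set \<Rightarrow> nat set \<Rightarrow> real" where
  "Hc p A C = H p (A \<union> C) - H p C"

definition cmi_valid :: "(nat \<Rightarrow> 'v) pmf \<Rightarrow> nat set \<Rightarrow> nat set list \<Rightarrow> bool" where
  "cmi_valid p C Qs \<longleftrightarrow>
     (\<Sum>i<length Qs. Hc p (Qs ! i) C) - Hc p (\<Union> (set Qs)) C = 0"

definition pure_form :: "nat set \<Rightarrow> nat set list \<Rightarrow> bool" where
  "pure_form C Qs \<longleftrightarrow> (\<forall>Q \<in> set Qs. Q \<noteq> {} \<and> Q \<inter> C = {})"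

definition repeated :: "nat set list \<Rightarrow> nat set" where
  "repeated Qs = {x. \<exists>i j. i < length Qs \<and> j < length Qs \<and> i \<noteq> j \<and> x \<in> Qs ! i \<and> x \<in> Qs ! j}"

end

theory Submission
  imports Defs
begin

lemma nonneg_sum_link:
  fixes f :: "'a \<Rightarrow> real" assumes nn: "\<And>x. f x \<ge> 0"
  shows "f summable_on UNIV \<longleftrightarrow> (\<integral>\<^sup>+x. ennreal (f x) \<partial>count_space UNIV) < \<infinity>"
    and "(\<integral>\<^sup>+x. ennreal (f x) \<partial>count_space UNIV) < \<infinity> \<Longrightarrow> infsum f UNIV = enn2real (\<integral>\<^sup>+x. ennreal (f x) \<partial>count_space UNIV)"
proof -
  have eq: "f summable_on UNIV \<longleftrightarrow> Infinite_Set_Sum.abs_summable_on f UNIV"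
    using summable_on_iff_abs_summable_on_real abs_summable_equivalent by blast
  have eq2: "Infinite_Set_Sum.abs_summable_on f UNIV \<longleftrightarrow> (\<integral>\<^sup>+x. ennreal (f x) \<partial>count_space UNIV) < \<infinity>"
    unfolding abs_summable_on_def integrable_iff_bounded using nn by simp
  show "f summable_on UNIV \<longleftrightarrow> (\<integral>\<^sup>+x. ennreal (f x) \<partial>count_space UNIV) < \<infinity>"
    using eq eq2 by simp
  assume lt: "(\<integral>\<^sup>+x. ennreal (f x) \<partial>count_space UNIV) < \<infinity>"
  then have "Infinite_Set_Sum.abs_summable_on f UNIV" using eq2 by simp
  then have "infsum f UNIV = infsetsum f UNIV" using infsetsum_infsum by metis
  also have "\<dots> = enn2real (\<integral>\<^sup>+x. ennreal (f x) \<partial>count_space UNIV)"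
    using infsetsum_conv_nn_integral[of UNIV f] lt nn by simp
  finally show "infsum f UNIV = enn2real (\<integral>\<^sup>+x. ennreal (f x) \<partial>count_space UNIV)" .
qed

definition qv :: "(nat \<Rightarrow> 'v) pmf \<Rightarrow> nat set \<Rightarrow> (nat \<Rightarrow> 'v) \<Rightarrow> real" where
  "qv p A \<omega> = pmf (map_pmf (proj A) p) (proj A \<omega>)"

definition LL :: "(nat \<Rightarrow> 'v) pmf \<Rightarrow> nat set \<Rightarrow> (nat \<Rightarrow> 'v) \<Rightarrow> real" where
  "LL p A \<omega> = - log 2 (qv p A \<omega>)"

definition EE :: "(nat \<Rightarrow> 'v) pmf \<Rightarrow> nat set \<Rightarrow> ennreal" where
  "EE p A = (\<integral>\<^sup>+\<omega>. ennreal (LL p A \<omega>) \<partial>measure_pmf p)"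

lemma proj_proj: "M \<subseteq> A \<Longrightarrow> proj M (proj A \<omega>) = proj M \<omega>"
  unfolding proj_def by (auto simp: fun_eq_iff)

lemma proj_eq_iff: "proj A x = proj A y \<longleftrightarrow> (\<forall>i\<in>A. x i = y i)"
  unfolding proj_def by (auto simp: fun_eq_iff)

lemma qv_alt: "qv p A \<omega> = measure p {\<omega>'. \<forall>i\<in>A. \<omega>' i = \<omega> i}"
  unfolding qv_def pmf_map by (simp add: vimage_def proj_eq_iff)

lemma qv_le1: "qv p A \<omega> \<le> 1"
  unfolding qv_alt by simp

lemma qv_nonneg: "qv p A \<omega> \<ge> 0"
  unfolding qv_alt by simp

lemma qv_pos: assumes "\<omega> \<in> set_pmf p" shows "qv p A \<omega> > 0"
proof -
  have "pmf p \<omega> \<le> qv p A \<omega>"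
    unfolding qv_alt measure_pmf_single[symmetric]
    by (rule measure_pmf.finite_measure_mono) auto
  moreover have "pmf p \<omega> > 0" using assms pmf_positive by metis
  ultimately show ?thesis by linarith
qed

lemma qv_mono: "A \<subseteq> B \<Longrightarrow> qv p B \<omega> \<le> qv p A \<omega>"
  unfolding qv_alt by (rule measure_pmf.finite_measure_mono) auto

lemma LL_nonneg: "LL p A \<omega> \<ge> 0"
proof (cases "qv p A \<omega> = 0")
  case True then show ?thesis by (simp add: LL_def log_def)
next
  case False
  then have "qv p A \<omega> > 0" using qv_nonneg[of p A \<omega>] by linarith
  then show ?thesis unfolding LL_def using qv_le1[of p A \<omega>] by simp
qed

lemma EE_eq: "EE p A = (\<integral>\<^sup>+y. ennreal (ent_term p A y) \<partial>count_space UNIV)"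
proof -
  define q where "q = map_pmf (proj A) p"
  define f where "f y = ennreal (- log 2 (pmf q y))" for y
  have "EE p A = (\<integral>\<^sup>+\<omega>. f (proj A \<omega>) \<partial>measure_pmf p)"
    unfolding EE_def LL_def qv_def f_def q_def ..
  also have "\<dots> = (\<integral>\<^sup>+y. f y \<partial>measure_pmf q)"
    unfolding q_def by simp
  also have "\<dots> = (\<integral>\<^sup>+y. ennreal (pmf q y) * f y \<partial>count_space UNIV)"
    by (rule nn_integral_measure_pmf)
  also have "\<dots> = (\<integral>\<^sup>+y. ennreal (ent_term p A y) \<partial>count_space UNIV)"
  proof (rule nn_integral_cong)
    fix y
    have "- log 2 (pmf q y) \<ge> 0"
    proof (cases "pmf q y = 0")
      case False
      then have "pmf q y > 0" using pmf_nonneg[of q y] by linarith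
      then show ?thesis using pmf_le_1[of q y] by simp
    qed (simp add: log_def)
    then show "ennreal (pmf q y) * f y = ennreal (ent_term p A y)"
      unfolding f_def ent_term_def Let_def q_def[symmetric]
      by (simp add: ennreal_mult[symmetric])
  qed
  finally show ?thesis .
qed

lemma ent_nonneg: "ent_term p A y \<ge> 0"
proof -
  define q where "q = pmf (map_pmf (proj A) p) y"
  have "q \<ge> 0" "q \<le> 1" unfolding q_def by (auto simp: pmf_le_1)
  then have "- log 2 q \<ge> 0" by (cases "q = 0") (auto simp: log_def divide_nonpos_pos)
  then show ?thesis unfolding ent_term_def Let_def q_def[symmetric]
    using \<open>q \<ge> 0\<close> by (simp add: mult_nonneg_nonpos)
qed

lemma EE_fin: "finite_entropy p A \<longleftrightarrow> EE p A < \<infinity>"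
  unfolding finite_entropy_def EE_eq by (rule nonneg_sum_link(1)) (rule ent_nonneg)

lemma EE_H: "EE p A < \<infinity> \<Longrightarrow> H p A = enn2real (EE p A)"
  unfolding H_def EE_eq by (rule nonneg_sum_link(2)) (rule ent_nonneg)

lemma EE_mono: "A \<subseteq> B \<Longrightarrow> EE p A \<le> EE p B"
  unfolding EE_def
proof (rule nn_integral_mono_AE, rule AE_pmfI)
  fix \<omega> assume "A \<subseteq> B" "\<omega> \<in> set_pmf p"
  then have "qv p B \<omega> \<le> qv p A \<omega>" "qv p B \<omega> > 0" using qv_mono[of A B p \<omega>] qv_pos[of \<omega> p B] by auto
  then show "ennreal (LL p A \<omega>) \<le> ennreal (LL p B \<omega>)"
    unfolding LL_def by (intro ennreal_leI) simp
qed

lemma EE_empty: "EE p {} = 0"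
proof -
  have "qv p {} \<omega> = 1" for \<omega> unfolding qv_alt by simp
  then show ?thesis unfolding EE_def LL_def by simp
qed

lemma qv_pmf: "M \<subseteq> A \<Longrightarrow> qv p M \<omega> = pmf (map_pmf (proj M) p) (proj M (proj A \<omega>))"
  unfolding qv_def by (simp add: proj_proj)

lemma W_int_le1:
  fixes p :: "(nat \<Rightarrow> 'v) pmf" and A B :: "nat set"
  defines "M \<equiv> A \<inter> B"
  shows "(\<integral>\<^sup>+\<omega>. ennreal (qv p A \<omega> * qv p B \<omega> / (qv p (A \<union> B) \<omega> * qv p M \<omega>)) \<partial>measure_pmf p) \<le> 1"
proof -
  define \<psi> where "\<psi> \<omega> = (proj A \<omega>, proj B \<omega>)" for \<omega> :: "nat \<Rightarrow> 'v"
  define q2 where "q2 = map_pmf \<psi> p"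
  define qA where "qA = map_pmf (proj A) p"
  define qB where "qB = map_pmf (proj B) p"
  define qM where "qM = map_pmf (proj M) p"
  define G where "G z = pmf qA (fst z) * pmf qB (snd z) / pmf qM (proj M (fst z))" for z
  define g where "g z = (if proj M (fst z) = proj M (snd z) then ennreal (1 / pmf qM (proj M (fst z))) else 0)" for z
  have MA: "M \<subseteq> A" and MB: "M \<subseteq> B" unfolding M_def by auto
  have q2eq: "qv p (A \<union> B) \<omega> = pmf q2 (\<psi> \<omega>)" for \<omega>
  proof -
    have "{\<omega>'. \<forall>i\<in>A \<union> B. \<omega>' i = \<omega> i} = \<psi> -` {\<psi> \<omega>}"
      unfolding \<psi>_def by (auto simp: proj_eq_iff)
    then show ?thesis unfolding qv_alt q2_def pmf_map by simp
  qed
  have Weq: "qv p A \<omega> * qv p B \<omega> / (qv p (A \<union> B) \<omega> * qv p M \<omega>) = G (\<psi> \<omega>) / pmf q2 (\<psi> \<omega>)" for \<omega>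
  proof -
    have "qv p A \<omega> * qv p B \<omega> / (qv p (A \<union> B) \<omega> * qv p M \<omega>) = qv p A \<omega> * qv p B \<omega> / (pmf q2 (\<psi> \<omega>) * qv p M \<omega>)"
      by (simp only: q2eq)
    also have "\<dots> = G (\<psi> \<omega>) / pmf q2 (\<psi> \<omega>)"
      unfolding G_def qA_def qB_def qM_def qv_def
      by (simp add: \<psi>_def proj_proj[OF MA])
    finally show ?thesis .
  qed
  have "(\<integral>\<^sup>+\<omega>. ennreal (qv p A \<omega> * qv p B \<omega> / (qv p (A \<union> B) \<omega> * qv p M \<omega>)) \<partial>measure_pmf p)
      = (\<integral>\<^sup>+z. ennreal (G z / pmf q2 z) \<partial>measure_pmf q2)"
    unfolding Weq q2_def by simp
  also have "\<dots> = (\<integral>\<^sup>+z. ennreal (pmf q2 z) * ennreal (G z / pmf q2 z) \<partial>count_space UNIV)"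
    by (rule nn_integral_measure_pmf)
  also have "\<dots> \<le> (\<integral>\<^sup>+z. ennreal (pmf (pair_pmf qA qB) z) * g z \<partial>count_space UNIV)"
  proof (rule nn_integral_mono)
    fix z :: "(nat \<Rightarrow> 'v) \<times> (nat \<Rightarrow> 'v)"
    show "ennreal (pmf q2 z) * ennreal (G z / pmf q2 z) \<le> ennreal (pmf (pair_pmf qA qB) z) * g z"
    proof (cases "z \<in> set_pmf q2")
      case False
      then show ?thesis by (simp add: set_pmf_iff)
    next
      case True
      then obtain \<omega> where \<omega>: "\<omega> \<in> set_pmf p" "z = \<psi> \<omega>" unfolding q2_def by auto
      have pos: "pmf q2 z > 0" using True pmf_positive by metis
      have eqM: "proj M (fst z) = proj M (snd z)" "proj M (fst z) = proj M \<omega>"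
        using \<omega> unfolding \<psi>_def by (auto simp: proj_proj[OF MA] proj_proj[OF MB])
      have Mpos: "pmf qM (proj M (fst z)) > 0"
        using qv_pos[OF \<omega>(1), of M] eqM unfolding qv_def qM_def by simp
      have Gnn: "G z \<ge> 0" unfolding G_def by simp
      have "ennreal (pmf q2 z) * ennreal (G z / pmf q2 z) = ennreal (G z)"
        using pos Gnn by (simp add: ennreal_mult[symmetric])
      also have "\<dots> = ennreal (pmf (pair_pmf qA qB) z) * g z"
        using eqM Mpos unfolding g_def G_def
        by (cases z) (simp add: pmf_pair ennreal_mult[symmetric])
      finally show ?thesis by simp
    qed
  qed
  also have "\<dots> = (\<integral>\<^sup>+z. g z \<partial>measure_pmf (pair_pmf qA qB))"
    by (rule nn_integral_measure_pmf[symmetric])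
  also have "\<dots> = (\<integral>\<^sup>+x. \<integral>\<^sup>+y. g (x, y) \<partial>measure_pmf qB \<partial>measure_pmf qA)"
    by (rule nn_integral_pair_pmf')
  also have "\<dots> \<le> (\<integral>\<^sup>+x. 1 \<partial>measure_pmf qA)"
  proof (rule nn_integral_mono_AE, rule AE_pmfI)
    fix x assume "x \<in> set_pmf qA"
    then obtain \<omega> where \<omega>: "\<omega> \<in> set_pmf p" "x = proj A \<omega>" unfolding qA_def by auto
    have xM: "proj M x = proj M \<omega>" using \<omega> proj_proj[OF MA] by simp
    have Mpos: "pmf qM (proj M x) > 0"
      using qv_pos[OF \<omega>(1), of M] xM unfolding qv_def qM_def by simp
    have "(\<integral>\<^sup>+y. g (x, y) \<partial>measure_pmf qB)
        = (\<integral>\<^sup>+y. ennreal (1 / pmf qM (proj M x)) * indicator {y. proj M y = proj M x} y \<partial>measure_pmf qB)"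
      unfolding g_def by (intro nn_integral_cong) (auto simp: indicator_def)
    also have "\<dots> = ennreal (1 / pmf qM (proj M x)) * emeasure (measure_pmf qB) {y. proj M y = proj M x}"
      by (simp add: nn_integral_cmult_indicator)
    also have "emeasure (measure_pmf qB) {y. proj M y = proj M x} = emeasure (measure_pmf p) (proj M -` {proj M x})"
      unfolding qB_def by (simp add: vimage_def proj_proj[OF MB])
    also have "\<dots> = ennreal (pmf qM (proj M x))"
      unfolding qM_def by (simp add: emeasure_pmf_single[symmetric])
    finally show "(\<integral>\<^sup>+y. g (x, y) \<partial>measure_pmf qB) \<le> 1"
      using Mpos by (simp add: ennreal_mult[symmetric])
  qed
  also have "\<dots> = 1" by simp
  finally show ?thesis .
qed

lemma pointwise_gibbs:
  fixes a b ab m :: real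
  assumes "a > 0" "b > 0" "ab > 0" "m > 0"
  shows "- log 2 ab + - log 2 m + 1 / ln 2 \<le> - log 2 a + - log 2 b + (1 / ln 2) * (a * b / (ab * m))"
proof -
  define W where "W = a * b / (ab * m)"
  have Wpos: "W > 0" unfolding W_def using assms by simp
  have lnW: "ln W = ln a + ln b - ln ab - ln m"
    unfolding W_def using assms by (simp add: ln_mult ln_div)
  have "ln W \<le> W - 1" using ln_le_minus_one[OF Wpos] .
  then have "(- ln ab - ln m + 1) / ln 2 \<le> (- ln a - ln b + W) / ln 2"
    by (intro divide_right_mono) (auto simp: lnW)
  then show ?thesis unfolding W_def[symmetric] log_def by (simp add: diff_divide_distrib add_divide_distrib)
qed

lemma EE_submod: "EE p (A \<union> B) + EE p (A \<inter> B) \<le> EE p A + EE p B"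
proof -
  define c where "c = 1 / ln (2::real)"
  define W where "W \<omega> = qv p A \<omega> * qv p B \<omega> / (qv p (A \<union> B) \<omega> * qv p (A \<inter> B) \<omega>)" for \<omega>
  have Wnn: "W \<omega> \<ge> 0" for \<omega> unfolding W_def by (simp add: qv_nonneg)
  have cpos: "c > 0" unfolding c_def by simp
  have "EE p (A \<union> B) + EE p (A \<inter> B) + ennreal c
     = (\<integral>\<^sup>+\<omega>. ennreal (LL p (A \<union> B) \<omega>) + ennreal (LL p (A \<inter> B) \<omega>) + ennreal c \<partial>measure_pmf p)"
    unfolding EE_def by (simp add: nn_integral_add)
  also have "\<dots> \<le> (\<integral>\<^sup>+\<omega>. ennreal (LL p A \<omega>) + ennreal (LL p B \<omega>) + ennreal c * ennreal (W \<omega>) \<partial>measure_pmf p)"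
  proof (rule nn_integral_mono_AE, rule AE_pmfI)
    fix \<omega> assume \<omega>: "\<omega> \<in> set_pmf p"
    have "LL p (A \<union> B) \<omega> + LL p (A \<inter> B) \<omega> + c \<le> LL p A \<omega> + LL p B \<omega> + c * W \<omega>"
      unfolding LL_def c_def W_def by (rule pointwise_gibbs) (auto intro: qv_pos[OF \<omega>])
    then show "ennreal (LL p (A \<union> B) \<omega>) + ennreal (LL p (A \<inter> B) \<omega>) + ennreal c
        \<le> ennreal (LL p A \<omega>) + ennreal (LL p B \<omega>) + ennreal c * ennreal (W \<omega>)"
      using LL_nonneg[of p] cpos Wnn[of \<omega>]
      by (simp add: ennreal_plus[symmetric] ennreal_mult[symmetric] del: ennreal_plus)
  qed
  also have "\<dots> = EE p A + EE p B + ennreal c * (\<integral>\<^sup>+\<omega>. ennreal (W \<omega>) \<partial>measure_pmf p)"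
    unfolding EE_def by (simp add: nn_integral_add nn_integral_cmult)
  also have "\<dots> \<le> EE p A + EE p B + ennreal c * 1"
    using W_int_le1[of p A B] unfolding W_def
    by (intro add_left_mono mult_left_mono) auto
  finally have "ennreal c + (EE p (A \<union> B) + EE p (A \<inter> B)) \<le> ennreal c + (EE p A + EE p B)"
    by (simp add: add_ac)
  then show ?thesis by (simp add: ennreal_add_left_cancel_le)
qed

lemma repeated_Nil: "repeated [] = {}"
  unfolding repeated_def by auto

lemma repeated_Cons: "repeated (Q # Rs) = repeated Rs \<union> (Q \<inter> \<Union>(set Rs))"
proof (rule set_eqI)
  fix x
  show "x \<in> repeated (Q # Rs) \<longleftrightarrow> x \<in> repeated Rs \<union> (Q \<inter> \<Union>(set Rs))"
  proof
    assume "x \<in> repeated (Q # Rs)"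
    then obtain i j where ij: "i < Suc (length Rs)" "j < Suc (length Rs)" "i \<noteq> j"
      "x \<in> (Q # Rs) ! i" "x \<in> (Q # Rs) ! j" unfolding repeated_def by auto
    show "x \<in> repeated Rs \<union> (Q \<inter> \<Union>(set Rs))"
    proof (cases i)
      case 0
      then obtain j' where "j = Suc j'" using ij by (cases j) auto
      then have "x \<in> Q" "x \<in> Rs ! j'" "j' < length Rs" using ij 0 by auto
      then have "x \<in> \<Union>(set Rs)" using nth_mem by blast
      then show ?thesis using \<open>x \<in> Q\<close> by blast
    next
      case (Suc i')
      show ?thesis
      proof (cases j)
        case 0
        then have "x \<in> Q" "x \<in> Rs ! i'" "i' < length Rs" using ij Suc by auto
        then have "x \<in> \<Union>(set Rs)" using nth_mem by blast
        then show ?thesis using \<open>x \<in> Q\<close> by blast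
      next
        case (Suc j')
        then show ?thesis using ij \<open>i = Suc i'\<close> unfolding repeated_def by auto
      qed
    qed
  next
    assume "x \<in> repeated Rs \<union> (Q \<inter> \<Union>(set Rs))"
    then show "x \<in> repeated (Q # Rs)"
    proof
      assume "x \<in> repeated Rs"
      then obtain i j where "i < length Rs" "j < length Rs" "i \<noteq> j" "x \<in> Rs ! i" "x \<in> Rs ! j"
        unfolding repeated_def by auto
      then show ?thesis unfolding repeated_def
        by (intro CollectI exI[of _ "Suc i"] exI[of _ "Suc j"]) auto
    next
      assume "x \<in> Q \<inter> \<Union>(set Rs)"
      then obtain j where "j < length Rs" "x \<in> Rs ! j" "x \<in> Q" by (auto simp: in_set_conv_nth)
      then show ?thesis unfolding repeated_def
        by (intro CollectI exI[of _ 0] exI[of _ "Suc j"]) auto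
    qed
  qed
qed

lemma repeated_sub: "repeated Qs \<subseteq> \<Union>(set Qs)"
  unfolding repeated_def using nth_mem by blast

lemma comb:
  fixes g :: "nat set \<Rightarrow> real" and U :: "nat set"
  assumes nn: "\<And>X. X \<subseteq> U \<Longrightarrow> g X \<ge> 0"
    and sub: "\<And>X Y. X \<subseteq> U \<Longrightarrow> Y \<subseteq> U \<Longrightarrow> g (X \<union> Y) + g (X \<inter> Y) \<le> g X + g Y"
    and e: "g {} = 0"
  shows "(\<And>Q. Q \<in> set Qs \<Longrightarrow> Q \<subseteq> U) \<Longrightarrow> g (repeated Qs) \<le> sum_list (map g Qs) - g (\<Union>(set Qs))"
proof (induction Qs)
  case Nil
  then show ?case by (simp add: repeated_Nil e)
next
  case (Cons Q Rs)
  define V where "V = \<Union>(set Rs)"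
  have QU: "Q \<subseteq> U" and VU: "V \<subseteq> U" using Cons.prems unfolding V_def by auto
  have RU: "repeated Rs \<subseteq> U" using VU repeated_sub[of Rs] unfolding V_def by auto
  have IH: "g (repeated Rs) \<le> sum_list (map g Rs) - g V" using Cons unfolding V_def by auto
  have s1: "g (Q \<union> V) + g (Q \<inter> V) \<le> g Q + g V" using sub QU VU by blast
  have s2: "g ((Q \<inter> V) \<union> repeated Rs) + g ((Q \<inter> V) \<inter> repeated Rs) \<le> g (Q \<inter> V) + g (repeated Rs)"
    using sub QU RU by (meson inf.coboundedI1)
  have s3: "g ((Q \<inter> V) \<inter> repeated Rs) \<ge> 0" using QU by (intro nn) auto
  have "repeated (Q # Rs) = (Q \<inter> V) \<union> repeated Rs" unfolding repeated_Cons V_def by auto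
  then show ?case using IH s1 s2 s3 by (simp add: V_def[symmetric])
qed

lemma drop_null:
  fixes g :: "nat set \<Rightarrow> real" and U :: "nat set"
  assumes nn: "\<And>X. X \<subseteq> U \<Longrightarrow> g X \<ge> 0"
    and mono: "\<And>X Y. X \<subseteq> Y \<Longrightarrow> Y \<subseteq> U \<Longrightarrow> g X \<le> g Y"
    and sub: "\<And>X Y. X \<subseteq> U \<Longrightarrow> Y \<subseteq> U \<Longrightarrow> g (X \<union> Y) + g (X \<inter> Y) \<le> g X + g Y"
    and IU: "I \<subseteq> U" and gI: "g I = 0" and XU: "X \<subseteq> U"
  shows "g (X - I) = g X"
proof -
  have a: "g (X - I) \<le> g X" using mono XU by auto
  have "g ((X - I) \<union> (X \<inter> I)) + g ((X - I) \<inter> (X \<inter> I)) \<le> g (X - I) + g (X \<inter> I)"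
    using XU by (intro sub) auto
  moreover have "(X - I) \<union> (X \<inter> I) = X" by auto
  moreover have "g ((X - I) \<inter> (X \<inter> I)) \<ge> 0" using XU by (intro nn) auto
  moreover have "g (X \<inter> I) \<le> g I" using mono IU by auto
  ultimately show ?thesis using a gI by auto
qed

lemma EE_finite_set:
  assumes fin: "\<And>i. i \<in> {1..n} \<Longrightarrow> finite_entropy p {i}"
  shows "X \<subseteq> {1..n} \<Longrightarrow> EE p X < \<infinity>"
proof -
  assume XU: "X \<subseteq> {1..n}"
  have "finite X" using XU finite_subset by blast
  then show ?thesis using XU
  proof (induction X rule: finite_induct)
    case empty
    then show ?case by (simp add: EE_empty)
  next
    case (insert i F)
    have "EE p ({i} \<union> F) \<le> EE p ({i} \<union> F) + EE p ({i} \<inter> F)" by simp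
    also have "\<dots> \<le> EE p {i} + EE p F" by (rule EE_submod)
    also have "\<dots> < \<infinity>" using insert fin[of i] EE_fin by auto
    finally show ?case by simp
  qed
qed

lemma H_facts:
  assumes fin: "\<And>i. i \<in> {1..n} \<Longrightarrow> finite_entropy p {i}"
  shows H_mono: "X \<subseteq> Y \<Longrightarrow> Y \<subseteq> {1..n} \<Longrightarrow> H p X \<le> H p Y"
    and H_sub: "X \<subseteq> {1..n} \<Longrightarrow> Y \<subseteq> {1..n} \<Longrightarrow> H p (X \<union> Y) + H p (X \<inter> Y) \<le> H p X + H p Y"
    and H_empty: "H p {} = 0"
proof -
  note F = EE_finite_set[of n p, OF fin]
  show "X \<subseteq> Y \<Longrightarrow> Y \<subseteq> {1..n} \<Longrightarrow> H p X \<le> H p Y"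
  proof -
    assume a: "X \<subseteq> Y" "Y \<subseteq> {1..n}"
    then have "EE p X < \<infinity>" "EE p Y < \<infinity>" using F by auto
    then show ?thesis using EE_mono[OF a(1), of p] by (simp add: EE_H enn2real_mono)
  qed
  show "X \<subseteq> {1..n} \<Longrightarrow> Y \<subseteq> {1..n} \<Longrightarrow> H p (X \<union> Y) + H p (X \<inter> Y) \<le> H p X + H p Y"
  proof -
    assume a: "X \<subseteq> {1..n}" "Y \<subseteq> {1..n}"
    then have f: "EE p X < \<infinity>" "EE p Y < \<infinity>" "EE p (X \<union> Y) < \<infinity>" "EE p (X \<inter> Y) < \<infinity>"
      using F[of X] F[of Y] F[of "X \<union> Y"] F[of "X \<inter> Y"] a by auto
    have "enn2real (EE p (X \<union> Y) + EE p (X \<inter> Y)) \<le> enn2real (EE p X + EE p Y)"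
      using EE_submod f by (intro enn2real_mono) auto
    then show ?thesis using f by (simp add: enn2real_plus EE_H)
  qed
  show "H p {} = 0" using EE_H[of p "{}"] by (simp add: EE_empty)
qed

lemma valid_iff: "cmi_valid p C Qs \<longleftrightarrow> sum_list (map (\<lambda>A. Hc p A C) Qs) - Hc p (\<Union>(set Qs)) C = 0"
  unfolding cmi_valid_def by (simp add: sum_list_sum_nth atLeast0LessThan)

theorem mainTheorem15:
  fixes p :: "(nat \<Rightarrow> 'v) pmf" and n :: nat and C :: "nat set" and Qs :: "nat set list"
  assumes fin: "\<And>i. i \<in> {1..n} \<Longrightarrow> finite_entropy p {i}"
    and C_sub: "C \<subseteq> {1..n}"
    and Q_sub: "\<And>Q. Q \<in> set Qs \<Longrightarrow> Q \<subseteq> {1..n}"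
    and pure: "pure_form C Qs"
  shows "cmi_valid p C Qs \<longleftrightarrow>
           (cmi_valid p C [repeated Qs, repeated Qs] \<and>
            cmi_valid p C (filter (\<lambda>S. S \<noteq> {}) (map (\<lambda>Q. Q - repeated Qs) Qs)))"
proof -
  define U where "U = {1..n}"
  define g where "g X = Hc p X C" for X
  define I where "I = repeated Qs"
  define Ps where "Ps = filter (\<lambda>S. S \<noteq> {}) (map (\<lambda>Q. Q - I) Qs)"
  note Hm = H_mono[of n p, OF fin] and Hs = H_sub[of n p, OF fin]
  have CU: "C \<subseteq> U" using C_sub U_def by simp
  have nn: "\<And>X. X \<subseteq> U \<Longrightarrow> g X \<ge> 0"
    unfolding g_def Hc_def using Hm CU U_def by auto
  have mono: "\<And>X Y. X \<subseteq> Y \<Longrightarrow> Y \<subseteq> U \<Longrightarrow> g X \<le> g Y"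
  proof -
    fix X Y assume "X \<subseteq> Y" "Y \<subseteq> U"
    then have "H p (X \<union> C) \<le> H p (Y \<union> C)" using CU U_def by (intro Hm) auto
    then show "g X \<le> g Y" unfolding g_def Hc_def by simp
  qed
  have sub: "\<And>X Y. X \<subseteq> U \<Longrightarrow> Y \<subseteq> U \<Longrightarrow> g (X \<union> Y) + g (X \<inter> Y) \<le> g X + g Y"
  proof -
    fix X Y assume "X \<subseteq> U" "Y \<subseteq> U"
    then have "H p ((X \<union> C) \<union> (Y \<union> C)) + H p ((X \<union> C) \<inter> (Y \<union> C)) \<le> H p (X \<union> C) + H p (Y \<union> C)"
      using CU U_def by (intro Hs) auto
    moreover have "(X \<union> C) \<union> (Y \<union> C) = (X \<union> Y) \<union> C" "(X \<union> C) \<inter> (Y \<union> C) = (X \<inter> Y) \<union> C" by auto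
    ultimately show "g (X \<union> Y) + g (X \<inter> Y) \<le> g X + g Y" unfolding g_def Hc_def by simp
  qed
  have e: "g {} = 0" unfolding g_def Hc_def by simp
  have QU: "\<And>Q. Q \<in> set Qs \<Longrightarrow> Q \<subseteq> U" using Q_sub U_def by simp
  have IU: "I \<subseteq> U" unfolding I_def using repeated_sub[of Qs] QU by blast
  have A: "g I \<le> sum_list (map g Qs) - g (\<Union>(set Qs))"
    unfolding I_def by (rule comb[of U g Qs, OF nn sub e QU])
  have vK: "cmi_valid p C Qs \<longleftrightarrow> sum_list (map g Qs) - g (\<Union>(set Qs)) = 0"
    unfolding valid_iff g_def ..
  have vI: "cmi_valid p C [I, I] \<longleftrightarrow> g I = 0"
    unfolding valid_iff g_def by simp
  have vP: "cmi_valid p C Ps \<longleftrightarrow> sum_list (map g Ps) - g (\<Union>(set Ps)) = 0"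
    unfolding valid_iff g_def ..
  have red: "sum_list (map g Ps) - g (\<Union>(set Ps)) = sum_list (map g Qs) - g (\<Union>(set Qs))"
    if gI: "g I = 0"
  proof -
    have dn: "\<And>X. X \<subseteq> U \<Longrightarrow> g (X - I) = g X" using drop_null[OF nn mono sub IU gI] .
    have "sum_list (map g Ps) = sum_list (map g (map (\<lambda>Q. Q - I) Qs))"
      unfolding Ps_def by (rule sum_list_map_filter) (auto simp: e)
    also have "map g (map (\<lambda>Q. Q - I) Qs) = map g Qs"
      unfolding map_map map_eq_conv comp_def using QU dn by blast
    finally have s: "sum_list (map g Ps) = sum_list (map g Qs)" .
    have "\<Union>(set Ps) = \<Union>(set Qs) - I" unfolding Ps_def by auto
    moreover have "\<Union>(set Qs) \<subseteq> U" using QU by auto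
    ultimately have "g (\<Union>(set Ps)) = g (\<Union>(set Qs))" using dn by simp
    then show ?thesis using s by simp
  qed
  have gI0: "0 \<le> g I" using nn[OF IU] .
  show ?thesis
    unfolding I_def[symmetric] Ps_def[symmetric] vK vI vP
  proof
    assume h: "sum_list (map g Qs) - g (\<Union>(set Qs)) = 0"
    then have "g I = 0" using A gI0 by linarith
    then show "g I = 0 \<and> sum_list (map g Ps) - g (\<Union>(set Ps)) = 0" using red h by simp
  next
    assume h: "g I = 0 \<and> sum_list (map g Ps) - g (\<Union>(set Ps)) = 0"
    then show "sum_list (map g Qs) - g (\<Union>(set Qs)) = 0" using red by simp
  qed
qed

end
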